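(* Let $R$ and $S$ be rings, where $S$ is both $2$-torsion-free and $3$-torsion-free, and let $\varphi:R\to S$ be an additive map with $\varphi(T(R))\subseteq T(S)$. If $a,b\in R$ are tripotents with $ab=ba=0$, then $\varphi(a)\varphi(b)=\varphi(b)\varphi(a)=0$.
   Context: For a ring $A$, $T(A)=\{a\in A: a^3=a\}$ is the set of tripotents. A ring $S$ is $n$-torsion-free if $ns=0$ implies $s=0$. *)

theory Defs
  imports Main
begin

text \<open>Rings need not be unital: we use the type class ring (no 1 required).\<close>

definition tripotents :: "'a::ring set" where
  "tripotents = {a. a * a * a = a}"

text \<open>n-fold sum n s = s + ... + s (n times), avoiding numerals in non-unital rings.\<close>
definition ntimes :: "nat \<Rightarrow> 'a::comm_monoid_add \<Rightarrow> 'a" where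
  "ntimes n s = (\<Sum>i<n. s)"

definition torsion_free :: "nat \<Rightarrow> 'a::ring itself \<Rightarrow> bool" where
  "torsion_free n _ \<longleftrightarrow> (\<forall>s::'a. ntimes n s = 0 \<longrightarrow> s = 0)"

definition additive :: "('a::ring \<Rightarrow> 'b::ring) \<Rightarrow> bool" where
  "additive f \<longleftrightarrow> (\<forall>x y. f (x + y) = f x + f y)"

end

theory Submission
  imports Defs
begin

lemma nt2: "ntimes 2 (s::'a::comm_monoid_add) = s + s"
  by (simp add: ntimes_def numeral_2_eq_2)

lemma nt3: "ntimes 3 (s::'a::comm_monoid_add) = s + s + s"
  by (simp add: ntimes_def numeral_3_eq_3 add.assoc)

lemma e1: fixes x y :: "'a::ring"
  assumes "x*x*x = x" "y*y*y=y" "(x + y) * (x + y) * (x + y) = x + y"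
  shows "(x*x*y + x*y*x + y*x*x) + (x*y*y + y*x*y + y*y*x) = 0"
proof -
  have "(x + y) * (x + y) * (x + y) = x*x*x + y*y*y + ((x*x*y + x*y*x + y*x*x) + (x*y*y + y*x*y + y*y*x))"
    by (simp add: distrib_left distrib_right add_ac)
  then show ?thesis using assms by (simp add: add_ac)
qed
lemma e2: fixes x y :: "'a::ring"
  assumes "x*x*x = x" "y*y*y=y" "(x - y) * (x - y) * (x - y) = x - y"
  shows "(x*x*y + x*y*x + y*x*x) - (x*y*y + y*x*y + y*y*x) = 0"
proof -
  have "(x - y) * (x - y) * (x - y) = x*x*x - y*y*y - ((x*x*y + x*y*x + y*x*x) - (x*y*y + y*x*y + y*y*x))"
    by (simp add: left_diff_distrib right_diff_distrib algebra_simps)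
  then show ?thesis using assms by simp
qed
lemma l: fixes x y :: "'a::ring" assumes "x*x*x = x"
  shows "x * (x*x*y + x*y*x + y*x*x) = x*y + x*x*y*x + x*y*x*x"
   "(x*x*y + x*y*x + y*x*x) * x = x*x*y*x + x*y*x*x + y*x"
proof -
  have a: "x*(x*(x*z)) = x*z" "z*x*x*x = z*x" for z using assms by (metis mult.assoc)+
  show "x * (x*x*y + x*y*x + y*x*x) = x*y + x*x*y*x + x*y*x*x" using a by (simp add: distrib_left mult.assoc)
  show "(x*x*y + x*y*x + y*x*x) * x = x*x*y*x + x*y*x*x + y*x" using a(2)[of y] by (simp add: distrib_right mult.assoc)
qed

theorem lemma6p1:
  fixes \<phi> :: "'r::ring \<Rightarrow> 's::ring"
  assumes "torsion_free 2 TYPE('s)"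
    and "torsion_free 3 TYPE('s)"
    and "additive \<phi>"
    and "\<phi> ` tripotents \<subseteq> tripotents"
    and "a \<in> tripotents" and "b \<in> tripotents"
    and "a * b = 0" and "b * a = 0"
  shows "\<phi> a * \<phi> b = 0 \<and> \<phi> b * \<phi> a = 0"
proof -
  have t2: "\<And>s::'s. s + s = 0 \<Longrightarrow> s = 0" using assms(1) nt2 unfolding torsion_free_def by metis
  have t3: "\<And>s::'s. s + s + s = 0 \<Longrightarrow> s = 0" using assms(2) nt3 unfolding torsion_free_def by metis
  have add: "\<And>u v. \<phi> (u + v) = \<phi> u + \<phi> v" using assms(3) unfolding additive_def by blast
  have sub: "\<phi> (a - b) = \<phi> a - \<phi> b"
  proof -
    have "\<phi> (a - b) + \<phi> b = \<phi> a" using add[of "a - b" b] by simp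
    then show ?thesis by (simp add: eq_diff_eq)
  qed
  have A: "a * a * a = a" and B: "b * b * b = b" using assms(5,6) by (auto simp: tripotents_def)
  have ab2: "\<And>z. a * (b * z) = 0" "\<And>z. b * (a * z) = 0"
    using assms(7,8) by (metis mult.assoc mult_zero_left)+
  have A': "a * (a * a) = a" and B': "b * (b * b) = b" using A B by (simp_all add: mult.assoc)
  have "(a + b) * (a + b) * (a + b) = a + b"
    using A' B' ab2 assms(7,8) by (simp add: distrib_left distrib_right mult.assoc)
  hence p: "\<phi> (a + b) \<in> tripotents" using assms(4) by (auto simp: tripotents_def)
  have "(a - b) * (a - b) * (a - b) = a - b"
    using A' B' ab2 assms(7,8) by (simp add: left_diff_distrib right_diff_distrib distrib_right mult.assoc)
  hence m: "\<phi> (a - b) \<in> tripotents" using assms(4) by (auto simp: tripotents_def)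
  define x where "x = \<phi> a"
  define y where "y = \<phi> b"
  have x3: "x * x * x = x" using assms(4,5) unfolding x_def tripotents_def by auto
  have y3: "y * y * y = y" using assms(4,6) unfolding y_def tripotents_def by auto
  have xp: "(x + y) * (x + y) * (x + y) = x + y" using p add unfolding x_def y_def tripotents_def by simp
  have xm: "(x - y) * (x - y) * (x - y) = x - y" using m sub unfolding x_def y_def tripotents_def by simp
  define P where "P = x*x*y + x*y*x + y*x*x"
  define Q where "Q = x*y*y + y*x*y + y*y*x"
  have e1: "P + Q = 0" using e1[OF x3 y3 xp] unfolding P_def Q_def .
  have e2: "P - Q = 0" using e2[OF x3 y3 xm] unfolding P_def Q_def .
  have "Q = P" using e2 by simp
  hence "P + P = 0" using e1 by simp
  hence P0: "P = 0" by (rule t2)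
  have c: "x*y = y*x"
  proof -
    have "x*y + x*x*y*x + x*y*x*x = 0" using l(1)[OF x3, of y] P0 unfolding P_def by simp
    moreover have "x*x*y*x + x*y*x*x + y*x = 0" using l(2)[OF x3, of y] P0 unfolding P_def by simp
    ultimately have "x*y + (x*x*y*x + x*y*x*x) = y*x + (x*x*y*x + x*y*x*x)"
      by (simp add: add_ac)
    thus ?thesis by simp
  qed
  have c1: "x*y*x = x*x*y" using c by (metis mult.assoc)
  have c2: "y*x*x = x*x*y" using c by (metis mult.assoc)
  have "x*x*y + x*x*y + x*x*y = 0" using P0 unfolding P_def c1 c2 .
  hence "x*x*y = 0" by (rule t3)
  hence "x*y = 0" using x3 by (metis mult.assoc mult_zero_right)
  thus ?thesis using c x_def y_def by simp
qed

end
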